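(* Let $\mathcal{A}=\{0,1\}$ and $\mathcal{F}=\{(0,0,0),(1,1,1)\}$, where $(a,b,c)$ denotes the $2$-block $u$ with $u_\epsilon=a$, $u_0=b$, $u_1=c$. Then $\mathsf{X}_{\mathcal{F}}$ is strongly irreducible with complete prefix code $P=\{0,10,11\}$, and it is not uniformly block gluing.
   Context: $\Sigma=\{0,1\}$. $\Sigma^*$ is the set of finite words, with $\epsilon$ the empty word. $\Sigma^k$ is the set of words of length $k$, and $\Sigma_n=\bigcup_{0\le k\le n}\Sigma^k$. A tree is $t:\Sigma^*\to\mathcal{A}$, and we write $t_x=t(x)$. A pattern $u$ is a map on a finite prefix-closed support $S(u)$. $\mathsf{X}_{\mathcal{F}}$ is the set of trees in which no pattern of $\mathcal{F}$ occurs at any node; here it is the set of trees $t$ such that for no $x$ do $t_x=t_{x0}=t_{x1}$ hold. A pattern is accepted by $X$ if it occurs in some $t\in X$. $B_n(X)=\{t|_{\Sigma_{n-1}}:t\in X\}$. For $w\in\Sigma^*$, $t|_{wS(v)}=v$ means $t_{wy}=v_y$ for all $y\in S(v)$. A leaf of $u$ is $w\in S(u)$ with $w0,w1\notin S(u)$. A complete prefix code (CPC) is a finite set $P\subseteq\Sigma^*\setminus\{\epsilon\}$ such that no word of $P$ is a prefix of another, and every $x$ with $|x|\ge\max_{y\in P}|y|$ has a prefix in $P$. Patterns $u,v$ are connected through $P$ if there is $t\in X$ with $t|_{S(u)}=u$ and $t|_{wxS(v)}=v$ for every leaf $w$ of $u$ and every $x\in P$. $X$ is strongly irreducible with CPC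 $P$ if any two patterns accepted by $X$ are connected through $P$. $X$ is uniformly block gluing if there is $k\ge1$ such that for every $n\ge1$ any $u,v\in B_n(X)$ are connected through $\Sigma^k$. *)

theory Defs
  imports Main
begin

text \<open>Words over Sigma = {0,1} are bool lists (False = 0, True = 1).\<close>

type_synonym word = "bool list"
type_synonym 'a tree = "word \<Rightarrow> 'a"
type_synonym 'a pattern = "word \<rightharpoonup> 'a"

definition is_pattern :: "'a pattern \<Rightarrow> bool" where
  "is_pattern u \<longleftrightarrow> finite (dom u) \<and> (\<forall>x y. x @ y \<in> dom u \<longrightarrow> x \<in> dom u)"

definition occurs_at :: "'a pattern \<Rightarrow> 'a tree \<Rightarrow> word \<Rightarrow> bool" where
  "occurs_at v t w \<longleftrightarrow> (\<forall>y\<in>dom v. v y = Some (t (w @ y)))"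

definition X_F :: "'a pattern set \<Rightarrow> 'a tree set" where
  "X_F F = {t. \<forall>x. \<forall>u\<in>F. \<not> occurs_at u t x}"

definition accepted :: "'a tree set \<Rightarrow> 'a pattern \<Rightarrow> bool" where
  "accepted X u \<longleftrightarrow> is_pattern u \<and> (\<exists>t\<in>X. \<exists>x. occurs_at u t x)"

definition Sigma_le :: "nat \<Rightarrow> word set" where
  "Sigma_le n = {x. length x \<le> n}"

definition Sigma_eq :: "nat \<Rightarrow> word set" where
  "Sigma_eq k = {x. length x = k}"

definition blocks :: "nat \<Rightarrow> 'a tree set \<Rightarrow> 'a pattern set" where
  "blocks n X = {(\<lambda>x. if x \<in> Sigma_le (n - 1) then Some (t x) else None) | t. t \<in> X}"

definition leaf :: "'a pattern \<Rightarrow> word \<Rightarrow> bool" where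
  "leaf u w \<longleftrightarrow> w \<in> dom u \<and> w @ [False] \<notin> dom u \<and> w @ [True] \<notin> dom u"

definition is_CPC :: "word set \<Rightarrow> bool" where
  "is_CPC P \<longleftrightarrow> finite P \<and> [] \<notin> P \<and>
     (\<forall>p\<in>P. \<forall>q\<in>P. (\<exists>z. q = p @ z) \<longrightarrow> p = q) \<and>
     (\<forall>x. (\<forall>y\<in>P. length y \<le> length x) \<longrightarrow> (\<exists>p\<in>P. \<exists>z. x = p @ z))"

definition connected_through :: "'a tree set \<Rightarrow> 'a pattern \<Rightarrow> 'a pattern \<Rightarrow> word set \<Rightarrow> bool" where
  "connected_through X u v P \<longleftrightarrow>
     (\<exists>t\<in>X. occurs_at u t [] \<and> (\<forall>w x. leaf u w \<longrightarrow> x \<in> P \<longrightarrow> occurs_at v t (w @ x)))"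

definition strongly_irreducible_with :: "'a tree set \<Rightarrow> word set \<Rightarrow> bool" where
  "strongly_irreducible_with X P \<longleftrightarrow> is_CPC P \<and>
     (\<forall>u v. accepted X u \<longrightarrow> accepted X v \<longrightarrow> connected_through X u v P)"

definition uniformly_block_gluing :: "'a tree set \<Rightarrow> bool" where
  "uniformly_block_gluing X \<longleftrightarrow> (\<exists>k\<ge>1. \<forall>n\<ge>1. \<forall>u\<in>blocks n X. \<forall>v\<in>blocks n X.
     connected_through X u v (Sigma_eq k))"

definition block3 :: "'a \<Rightarrow> 'a \<Rightarrow> 'a \<Rightarrow> 'a pattern" where
  "block3 a b c = [[] \<mapsto> a, [False] \<mapsto> b, [True] \<mapsto> c]"

end

theory Submission
  imports Defs
begin
lemma X_char: "t \<in> X_F {block3 False False False, block3 True True True} \<longleftrightarrow>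
   (\<forall>x. \<not> (t (x@[False]) = t x \<and> t (x@[True]) = t x))"
  unfolding X_F_def occurs_at_def block3_def by auto

lemma cpc: "is_CPC {[False], [True, False], [True, True]}"
  unfolding is_CPC_def
proof (intro conjI allI impI)
  fix x :: word assume "\<forall>y\<in>{[False], [True, False], [True, True]}. length y \<le> length x"
  then have "length x \<ge> 2" by auto
  then obtain a b z where "x = a # b # z" by (cases x; cases "tl x"; auto)
  then show "\<exists>p\<in>{[False], [True, False], [True, True]}. \<exists>z. x = p @ z"
    by (cases a; cases b; auto)
qed auto

lemma alt:
  assumes X: "\<forall>x::word. \<not> (t (x@[False]) = t x \<and> t (x@[True]) = t x)"
    and V: "\<forall>x. length x = k \<longrightarrow> t x = c"
  shows "\<forall>y. length y + m = k \<longrightarrow> t y = (c = even m)"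
proof (induction m)
  case 0 then show ?case using V by auto
next
  case (Suc m)
  show ?case
  proof (intro allI impI)
    fix y :: word assume "length y + Suc m = k"
    then have "t (y@[False]) = (c = even m)" "t (y@[True]) = (c = even m)"
      using Suc by auto
    then show "t y = (c = even (Suc m))" using X[rule_format, of y] by auto
  qed
qed
lemma par_in: "(\<lambda>x::word. even (length x) = a) \<in> X_F {block3 False False False, block3 True True True}"
  unfolding X_char by auto

lemma not_ubg: "\<not> uniformly_block_gluing (X_F {block3 False False False, block3 True True True})"
proof
  let ?X = "X_F {block3 False False False, block3 True True True}"
  assume "uniformly_block_gluing ?X"
  then obtain k where k: "k \<ge> 1" and H: "\<forall>n\<ge>1. \<forall>u\<in>blocks n ?X. \<forall>v\<in>blocks n ?X.
     connected_through ?X u v (Sigma_eq k)" unfolding uniformly_block_gluing_def by blast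
  define ta where "ta = (\<lambda>x::word. even (length x) = odd k)"
  define tb where "tb = (\<lambda>x::word. even (length x) = True)"
  define u where "u = (\<lambda>x. if x \<in> Sigma_le (1 - 1) then Some (ta x) else None)"
  define v where "v = (\<lambda>x. if x \<in> Sigma_le (1 - 1) then Some (tb x) else None)"
  have "u \<in> blocks 1 ?X" unfolding blocks_def u_def using par_in[of "odd k", folded ta_def] by blast
  moreover have "v \<in> blocks 1 ?X" unfolding blocks_def v_def using par_in[of "True", folded tb_def] by blast
  ultimately have "connected_through ?X u v (Sigma_eq k)" using H by auto
  then obtain t where tX: "t \<in> ?X" and o1: "occurs_at u t []" and
    o2: "\<forall>w x. leaf u w \<longrightarrow> x \<in> Sigma_eq k \<longrightarrow> occurs_at v t (w @ x)"
    unfolding connected_through_def by blast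
  have domu: "dom u = {[]}" unfolding u_def Sigma_le_def by (auto split: if_splits)
  have domv: "dom v = {[]}" unfolding v_def Sigma_le_def by (auto split: if_splits)
  have t0: "t [] = odd k" using o1 domu unfolding occurs_at_def u_def ta_def Sigma_le_def by auto
  have lf: "leaf u []" using domu unfolding leaf_def by auto
  have V: "\<forall>x. length x = k \<longrightarrow> t x = True"
  proof (intro allI impI)
    fix x :: word assume "length x = k"
    then have "occurs_at v t x" using o2 lf unfolding Sigma_eq_def by auto
    then show "t x = True" using domv unfolding occurs_at_def v_def tb_def Sigma_le_def by auto
  qed
  have "\<forall>y. length y + k = k \<longrightarrow> t y = (True = even k)"
    by (rule alt[OF tX[unfolded X_char] V])
  then have "t [] = even k" by auto
  with t0 show False by simp
qed
lemma leaf_unique: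
  assumes p: "is_pattern u" and l1: "leaf u w" and l2: "leaf u w'"
    and eq: "w @ c # d = w' @ c' # d'"
  shows "w = w' \<and> c = c' \<and> d = d'"
proof -
  have "w = w'"
  proof (rule ccontr)
    assume ne: "w \<noteq> w'"
    from eq have "(\<exists>e. w' = w @ e) \<or> (\<exists>e. w = w' @ e)"
      by (metis append_eq_append_conv2)
    then show False
    proof
      assume "\<exists>e. w' = w @ e"
      then obtain e where e: "w' = w @ e" by blast
      with ne obtain b e' where "e = b # e'" by (cases e) auto
      with e l2 have "(w @ [b]) @ e' \<in> dom u" unfolding leaf_def by simp
      then have "w @ [b] \<in> dom u" using p unfolding is_pattern_def by blast
      with l1 show False unfolding leaf_def by (cases b) auto
    next
      assume "\<exists>e. w = w' @ e"
      then obtain e where e: "w = w' @ e" by blast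
      with ne obtain b e' where "e = b # e'" by (cases e) auto
      with e l1 have "(w' @ [b]) @ e' \<in> dom u" unfolding leaf_def by simp
      then have "w' @ [b] \<in> dom u" using p unfolding is_pattern_def by blast
      with l2 show False unfolding leaf_def by (cases b) auto
    qed
  qed
  with eq show ?thesis by simp
qed

lemma not_below_leaf:
  assumes p: "is_pattern u" and y: "y \<in> dom u"
  shows "\<not> (\<exists>w c d. leaf u w \<and> y = w @ c # d)"
proof
  assume "\<exists>w c d. leaf u w \<and> y = w @ c # d"
  then obtain w c d where l: "leaf u w" and yy: "y = w @ c # d" by blast
  then have "(w @ [c]) @ d \<in> dom u" using y by simp
  then have "w @ [c] \<in> dom u" using p unfolding is_pattern_def by blast
  with l show False unfolding leaf_def by (cases c) auto
qed

lemma si: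
  fixes u v :: "bool pattern"
  defines "X \<equiv> X_F {block3 False False False, block3 True True True}"
  assumes au: "accepted X u" and av: "accepted X v"
  shows "connected_through X u v {[False], [True, False], [True, True]}"
proof -
  obtain t1 xu where t1: "t1 \<in> X" and o1: "occurs_at u t1 xu" and p: "is_pattern u"
    using au unfolding accepted_def by blast
  obtain t2 xv where t2: "t2 \<in> X" and o2: "occurs_at v t2 xv"
    using av unfolding accepted_def by blast
  define s where "s z = t2 (xv @ z)" for z
  define B where "B y \<longleftrightarrow> (\<exists>w c d. leaf u w \<and> y = w @ c # d)" for y
  define t where "t y = (if B y then
     (let (c, d) = (SOME cd. \<exists>w. leaf u w \<and> y = w @ fst cd # snd cd) in
        if \<not> c then s d else (case d of [] \<Rightarrow> \<not> s [] | b # d' \<Rightarrow> s d'))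
     else t1 (xu @ y))" for y
  have tB: "t (w @ c # d) = (if \<not> c then s d else (case d of [] \<Rightarrow> \<not> s [] | b # d' \<Rightarrow> s d'))"
    if l: "leaf u w" for w c d
  proof -
    have Bw: "B (w @ c # d)" unfolding B_def using l by blast
    have "(SOME cd. \<exists>w'. leaf u w' \<and> w @ c # d = w' @ fst cd # snd cd) = (c, d)"
    proof (rule some_equality)
      fix cd assume "\<exists>w'. leaf u w' \<and> w @ c # d = w' @ fst cd # snd cd"
      then obtain w' where "leaf u w'" "w @ c # d = w' @ fst cd # snd cd" by blast
      then show "cd = (c, d)" using leaf_unique[OF p l, where w'=w' and c=c and d=d and c'="fst cd" and d'="snd cd"] by (cases cd) auto
    qed (use l in auto)
    then show ?thesis unfolding t_def using Bw by simp
  qed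
  have tN: "t y = t1 (xu @ y)" if "\<not> B y" for y
    using that unfolding t_def by simp
  have g1: "\<forall>x. \<not> (t1 (x@[False]) = t1 x \<and> t1 (x@[True]) = t1 x)"
    using t1 unfolding X_def X_char .
  have g2: "\<forall>x. \<not> (s (x@[False]) = s x \<and> s (x@[True]) = s x)"
    using t2 unfolding X_def X_char s_def by (metis append.assoc)
  have tX: "t \<in> X"
    unfolding X_def X_char
  proof (intro allI)
    fix y :: word
    show "\<not> (t (y@[False]) = t y \<and> t (y@[True]) = t y)"
    proof (cases "B y")
      case True
      then obtain w c d where l: "leaf u w" and yy: "y = w @ c # d" unfolding B_def by blast
      show ?thesis
      proof (cases c)
        case False
        then show ?thesis using tB[OF l, of c "d @ [False]"] tB[OF l, of c "d @ [True]"]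
            tB[OF l, of c d] g2[rule_format, of d] yy by simp
      next
        case c: True
        show ?thesis
        proof (cases d)
          case Nil
          then show ?thesis using tB[OF l, of c "[False]"] tB[OF l, of c "[True]"]
            tB[OF l, of c d] yy c by simp
        next
          case (Cons b d')
          then show ?thesis using tB[OF l, of c "d @ [False]"] tB[OF l, of c "d @ [True]"]
            tB[OF l, of c d] g2[rule_format, of d'] yy c by simp
        qed
      qed
    next
      case False
      show ?thesis
      proof (cases "leaf u y")
        case True
        then show ?thesis using tB[OF True, of False "[]"] tB[OF True, of True "[]"]
          by auto
      next
        case nl: False
        have "\<not> B (y @ [b])" for b
        proof
          assume "B (y @ [b])"
          then obtain w c d where l: "leaf u w" and yy: "y @ [b] = w @ c # d"
            unfolding B_def by blast
          show False
          proof (cases d rule: rev_cases)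
            case Nil
            then show False using yy l nl by simp
          next
            case (snoc d' e)
            then have "y = w @ c # d'" using yy by simp
            then show False using False l unfolding B_def by blast
          qed
        qed
        then show ?thesis using tN[OF False] tN g1[rule_format, of "xu @ y"] by simp
      qed
    qed
  qed
  have ou: "occurs_at u t []"
    unfolding occurs_at_def
  proof
    fix y assume y: "y \<in> dom u"
    have "\<not> B y" using not_below_leaf[OF p y] unfolding B_def .
    then show "u y = Some (t ([] @ y))" using tN o1 y unfolding occurs_at_def by simp
  qed
  have ov: "occurs_at v t (w @ x)" if l: "leaf u w" and x: "x \<in> {[False], [True, False], [True, True]}" for w x
    unfolding occurs_at_def
  proof
    fix y assume y: "y \<in> dom v"
    have vy: "v y = Some (s y)" using o2 y unfolding occurs_at_def s_def by simp
    from x show "v y = Some (t ((w @ x) @ y))"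
      using tB[OF l, of False y] tB[OF l, of True "False # y"] tB[OF l, of True "True # y"] vy
      by auto
  qed
  show ?thesis unfolding connected_through_def using tX ou ov by blast
qed
theorem mainTheorem9:
  fixes F :: "bool pattern set"
  defines "F \<equiv> {block3 False False False, block3 True True True}"
  shows "strongly_irreducible_with (X_F F) {[False], [True, False], [True, True]}
         \<and> \<not> uniformly_block_gluing (X_F F)"
  unfolding F_def strongly_irreducible_with_def using cpc si not_ubg by blast

end
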